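(* Let $v$ be an aperiodic infinite word over $\{0,1\}$ such that $\Phi_{\mathbb{R}}(v)$ exists, and for $\ell\ge1$ let $u^{(\ell)}$ be its prefix of length $\ell$. Then $$\lim_{\ell\to\infty}C_{\mathbb{R}}(u^{(\ell)})=\Phi_{\mathbb{R}}(v).$$
   Context: For a finite $0$-$1$ word $u$ of length $\ell\ge1$ and height $h$ (number of $1$'s) with $1$'s at positions $d_0<\dots<d_{h-1}$, let $\varphi(u)=\sum_{i=0}^{h-1}3^{h-1-i}2^{d_i}$ and $C_{\mathbb{R}}(u)=\varphi(u)/(2^\ell-3^h)\in\mathbb{Q}$. For an infinite word $v$ with $1$'s at positions $d_0<d_1<\cdots$, $\Phi_{\mathbb{R}}(v)=-\sum_{i\ge0}2^{d_i}/3^{i+1}$, said to exist if the series converges in $\mathbb{R}$. *)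

theory Defs
  imports Complex_Main "HOL-Library.Infinite_Set"
begin

text \<open>Finite 0-1 words are lists of booleans (True = 1); infinite words are nat => bool.\<close>

definition ones_pos :: "bool list \<Rightarrow> nat list" where
  "ones_pos u = filter (\<lambda>i. u ! i) [0..<length u]"

definition height :: "bool list \<Rightarrow> nat" where
  "height u = length (ones_pos u)"

definition phi :: "bool list \<Rightarrow> nat" where
  "phi u = (\<Sum>i<height u. 3 ^ (height u - 1 - i) * 2 ^ (ones_pos u ! i))"

definition C_R :: "bool list \<Rightarrow> real" where
  "C_R u = real (phi u) / (2 ^ length u - 3 ^ height u)"

definition inf_ones :: "(nat \<Rightarrow> bool) \<Rightarrow> nat \<Rightarrow> nat" where
  "inf_ones v i = enumerate {n. v n} i"

definition Phi_R_exists :: "(nat \<Rightarrow> bool) \<Rightarrow> bool" where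
  "Phi_R_exists v = (finite {n. v n} \<or>
     summable (\<lambda>i. 2 ^ inf_ones v i / 3 ^ (i + 1) :: real))"

definition Phi_R :: "(nat \<Rightarrow> bool) \<Rightarrow> real" where
  "Phi_R v = (if finite {n. v n}
     then - (\<Sum>i<card {n. v n}. 2 ^ inf_ones v i / 3 ^ (i + 1))
     else - (\<Sum>i. 2 ^ inf_ones v i / 3 ^ (i + 1)))"

definition aperiodic :: "(nat \<Rightarrow> bool) \<Rightarrow> bool" where
  "aperiodic v = (\<not> (\<exists>p>0. \<exists>N. \<forall>n\<ge>N. v (n + p) = v n))"

definition prefix_word :: "(nat \<Rightarrow> bool) \<Rightarrow> nat \<Rightarrow> bool list" where
  "prefix_word v l = map v [0..<l]"

end

theory Submission
  imports Defs
begin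

lemma prefix_struct:
  assumes inf: "infinite {n. v n}"
  shows "\<exists>k. filter v [0..<l] = map (inf_ones v) [0..<k] \<and> (\<forall>i. inf_ones v i < l \<longleftrightarrow> i < k)"
proof (induction l)
  case 0
  then show ?case by auto
next
  case (Suc l)
  then obtain k where k1: "filter v [0..<l] = map (inf_ones v) [0..<k]"
    and k2: "\<forall>i. inf_ones v i < l \<longleftrightarrow> i < k" by blast
  have mem: "v (inf_ones v i)" for i
    using enumerate_in_set[OF inf, of i] by (simp add: inf_ones_def)
  have mono: "inf_ones v i < inf_ones v j \<longleftrightarrow> i < j" for i j
    using inf by (simp add: inf_ones_def)
  show ?case
  proof (cases "v l")
    case False
    have "inf_ones v i < Suc l \<longleftrightarrow> i < k" for i
      using k2 mem[of i] False by (metis less_Suc_eq)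
    then show ?thesis using k1 False by auto
  next
    case True
    obtain j where j: "inf_ones v j = l"
      using enumerate_Ex[OF inf, of l] True by (auto simp: inf_ones_def)
    have "j = k"
    proof -
      have "\<not> j < k" using k2 j by auto
      moreover have "\<not> k < j" using k2 j mono[of k j] by auto
      ultimately show ?thesis by simp
    qed
    have "inf_ones v i < Suc l \<longleftrightarrow> i < Suc k" for i
      using k2 j \<open>j = k\<close> mono[of i k] mono[of k i] by (metis less_Suc_eq nat_neq_iff)
    moreover have "filter v [0..<Suc l] = map (inf_ones v) [0..<Suc k]"
      using k1 True j \<open>j = k\<close> by simp
    ultimately show ?thesis by blast
  qed
qed

theorem lemma32:
  fixes v :: "nat \<Rightarrow> bool"
  assumes "aperiodic v" and "Phi_R_exists v"
  shows "(\<lambda>l. C_R (prefix_word v l)) \<longlonglongrightarrow> Phi_R v"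
proof -
  have inf: "infinite {n. v n}"
  proof
    assume fin: "finite {n. v n}"
    then obtain N where N: "\<forall>n\<in>{n. v n}. n < N"
      using finite_nat_set_iff_bounded by blast
    have "\<forall>n\<ge>N. v (n + 1) = v n" using N by force
    then show False using assms(1) unfolding aperiodic_def by blast
  qed
  define d where "d = inf_ones v"
  define t where "t i = (2 ^ d i / 3 ^ (i + 1) :: real)" for i
  define S where "S k = (\<Sum>i<k. t i)" for k
  have summ: "summable t" using assms(2) inf unfolding Phi_R_exists_def t_def d_def by auto
  have Phi: "Phi_R v = - suminf t" using inf unfolding Phi_R_def t_def d_def by simp
  define K where "K l = height (prefix_word v l)" for l
  have KP: "ones_pos (prefix_word v l) = map d [0..<K l] \<and> (\<forall>i. d i < l \<longleftrightarrow> i < K l)" for l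
  proof -
    obtain k where k1: "filter v [0..<l] = map d [0..<k]" and k2: "\<forall>i. d i < l \<longleftrightarrow> i < k"
      using prefix_struct[OF inf, of l] d_def by blast
    have op: "ones_pos (prefix_word v l) = filter v [0..<l]"
      unfolding ones_pos_def prefix_word_def
      by (rule filter_cong) auto
    have "K l = k" unfolding K_def height_def op k1 by simp
    then show ?thesis using op k1 k2 by simp
  qed
  have lenp: "length (prefix_word v l) = l" for l by (simp add: prefix_word_def)
  have phiK: "real (phi (prefix_word v l)) = 3 ^ K l * S (K l)" for l
  proof -
    have "real (phi (prefix_word v l)) = (\<Sum>i<K l. 3 ^ (K l - 1 - i) * 2 ^ d i)"
      unfolding phi_def K_def[symmetric] using KP[of l] by simp
    also have "\<dots> = (\<Sum>i<K l. 3 ^ K l * t i)"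
    proof (rule sum.cong)
      fix i assume "i \<in> {..<K l}"
      then have e: "K l = (K l - 1 - i) + (i + 1)" by auto
      have "(3::real) ^ K l = 3 ^ (K l - 1 - i) * 3 ^ (i + 1)"
        by (subst e) (simp add: power_add)
      then show "(3::real) ^ (K l - 1 - i) * 2 ^ d i = 3 ^ K l * t i"
        unfolding t_def by simp
    qed simp
    finally show ?thesis by (simp add: S_def sum_distrib_left)
  qed
  define x where "x l = (2::real) ^ l / 3 ^ K l" for l
  have Ceq: "C_R (prefix_word v l) = - S (K l) / (1 - x l)" for l
  proof -
    have "C_R (prefix_word v l) = 3 ^ K l * S (K l) / (3 ^ K l * (x l - 1))"
      unfolding C_R_def lenp phiK x_def K_def[symmetric] by (simp add: algebra_simps)
    also have "\<dots> = S (K l) / (x l - 1)" by simp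
    also have "\<dots> = - S (K l) / (1 - x l)"
      by (metis divide_minus_left divide_minus_right minus_diff_eq)
    finally show ?thesis .
  qed
  have Klim: "filterlim K at_top sequentially"
    unfolding filterlim_at_top
  proof (intro allI)
    fix M
    show "eventually (\<lambda>l. M \<le> K l) sequentially"
      unfolding eventually_sequentially
      using KP by (metis le_less_Suc_eq less_Suc_eq nat_le_linear not_less_eq)
  qed
  have Slim: "(\<lambda>l. S (K l)) \<longlonglongrightarrow> suminf t"
    using filterlim_compose[OF summable_LIMSEQ[OF summ] Klim] unfolding S_def by simp
  have tlim: "(\<lambda>l. t (K l)) \<longlonglongrightarrow> 0"
    using filterlim_compose[OF summable_LIMSEQ_zero[OF summ] Klim] by simp
  have xlim: "x \<longlonglongrightarrow> 0"
  proof (rule tendsto_sandwich[where f="\<lambda>_. 0" and g=x and h="\<lambda>l. 3 * t (K l)"])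
    show "(\<lambda>l. 3 * t (K l)) \<longlonglongrightarrow> 0" using tendsto_mult_right_zero[OF tlim] by simp
    show "eventually (\<lambda>l. 0 \<le> x l) sequentially" by (simp add: x_def)
    show "((\<lambda>_. 0::real) \<longlongrightarrow> 0) sequentially" by simp
    show "eventually (\<lambda>l. x l \<le> 3 * t (K l)) sequentially"
    proof (rule always_eventually, intro allI)
      fix l
      have "l \<le> d (K l)" using KP[of l] by (meson not_less order_refl)
      then have "(2::real) ^ l \<le> 2 ^ d (K l)" by simp
      then have "x l \<le> 2 ^ d (K l) / 3 ^ K l" unfolding x_def
        by (simp add: divide_right_mono)
      also have "\<dots> = 3 * t (K l)" unfolding t_def by simp
      finally show "x l \<le> 3 * t (K l)" .
    qed
  qed
  have "(\<lambda>l. - S (K l) / (1 - x l)) \<longlonglongrightarrow> - suminf t / (1 - 0)"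
    by (intro tendsto_intros Slim xlim) simp
  then show ?thesis unfolding Ceq Phi by simp
qed

end
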